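(* Fix a monomial order on $S$. Let $J$ be a binomial ideal of $S$ (an ideal generated by binomials) and $E$ a monomial ideal of $S$. Then $J+E=J+\widehat E$.
   Context: $K$ is a field and $S=K[x_1,\ldots,x_n]$ with a fixed monomial order. For $0\neq f\in S$, $\mathrm{in}(f)$ denotes its leading monomial; for an ideal $I$, $\mathrm{in}(I)$ is the ideal generated by the leading monomials of the nonzero elements of $I$. A pair $(J,E)$ of ideals is G-nice if $\mathrm{in}(J+E)=\mathrm{in}(J)+\mathrm{in}(E)$. For an ideal $J$ and a monomial ideal $E$, $\widehat E$ (the G-nice monomial closure of $E$ with respect to $J$) is the intersection of all monomial ideals $F$ of $S$ with $E\subseteq F$ and $(J,F)$ G-nice. *)

theory Defs
  imports "HOL-Library.Poly_Mapping"
begin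

(* The polynomial ring S = K[x_v : v in 'v] (with 'v a finite type of variables)
 is modelled as the type (('v \<Rightarrow>\<^sub>0 nat) \<Rightarrow>\<^sub>0 'a): finitely supported maps from
 exponent vectors (monomials) to coefficients. *)

type_synonym ('v, 'a) mpoly = "('v \<Rightarrow>\<^sub>0 nat) \<Rightarrow>\<^sub>0 'a"

definition is_ideal :: "'r::comm_ring_1 set \<Rightarrow> bool" where
  "is_ideal I \<longleftrightarrow> 0 \<in> I \<and> (\<forall>a\<in>I. \<forall>b\<in>I. a + b \<in> I) \<and> (\<forall>r. \<forall>a\<in>I. r * a \<in> I)"

definition ideal_gen :: "'r::comm_ring_1 set \<Rightarrow> 'r set" where
  "ideal_gen A = \<Inter>{I. is_ideal I \<and> A \<subseteq> I}"

definition ideal_sum :: "'r::comm_ring_1 set \<Rightarrow> 'r set \<Rightarrow> 'r set" where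
  "ideal_sum I J = {a + b | a b. a \<in> I \<and> b \<in> J}"

definition monom :: "('v \<Rightarrow>\<^sub>0 nat) \<Rightarrow> ('v, 'a::comm_ring_1) mpoly" where
  "monom m = Poly_Mapping.single m 1"

definition is_monomial_ideal :: "('v, 'a::comm_ring_1) mpoly set \<Rightarrow> bool" where
  "is_monomial_ideal I \<longleftrightarrow> (\<exists>M. I = ideal_gen (monom ` M))"

definition is_binomial :: "('v, 'a::comm_ring_1) mpoly \<Rightarrow> bool" where
  "is_binomial f \<longleftrightarrow> card (Poly_Mapping.keys f) \<le> 2"

definition is_binomial_ideal :: "('v, 'a::comm_ring_1) mpoly set \<Rightarrow> bool" where
  "is_binomial_ideal I \<longleftrightarrow> (\<exists>B. (\<forall>f\<in>B. is_binomial f) \<and> I = ideal_gen B)"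

definition monomial_order :: "(('v \<Rightarrow>\<^sub>0 nat) \<Rightarrow> ('v \<Rightarrow>\<^sub>0 nat) \<Rightarrow> bool) \<Rightarrow> bool" where
  "monomial_order le \<longleftrightarrow>
     (\<forall>x. le x x) \<and> (\<forall>x y z. le x y \<longrightarrow> le y z \<longrightarrow> le x z) \<and>
     (\<forall>x y. le x y \<longrightarrow> le y x \<longrightarrow> x = y) \<and> (\<forall>x y. le x y \<or> le y x) \<and>
     (\<forall>x. le 0 x) \<and> (\<forall>x y z. le x y \<longrightarrow> le (x + z) (y + z))"

definition lead_mon :: "(('v \<Rightarrow>\<^sub>0 nat) \<Rightarrow> ('v \<Rightarrow>\<^sub>0 nat) \<Rightarrow> bool) \<Rightarrow> ('v, 'a::zero) mpoly \<Rightarrow> 'v \<Rightarrow>\<^sub>0 nat" where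
  "lead_mon le f = (THE m. m \<in> Poly_Mapping.keys f \<and> (\<forall>m'\<in>Poly_Mapping.keys f. le m' m))"

definition init_ideal :: "(('v \<Rightarrow>\<^sub>0 nat) \<Rightarrow> ('v \<Rightarrow>\<^sub>0 nat) \<Rightarrow> bool) \<Rightarrow> ('v, 'a::comm_ring_1) mpoly set \<Rightarrow> ('v, 'a) mpoly set" where
  "init_ideal le I = ideal_gen {monom (lead_mon le f) | f. f \<in> I \<and> f \<noteq> 0}"

definition G_nice :: "(('v \<Rightarrow>\<^sub>0 nat) \<Rightarrow> ('v \<Rightarrow>\<^sub>0 nat) \<Rightarrow> bool) \<Rightarrow> ('v, 'a::comm_ring_1) mpoly set \<Rightarrow> ('v, 'a) mpoly set \<Rightarrow> bool" where
  "G_nice le J E \<longleftrightarrow> init_ideal le (ideal_sum J E) = ideal_sum (init_ideal le J) (init_ideal le E)"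

definition G_nice_closure :: "(('v \<Rightarrow>\<^sub>0 nat) \<Rightarrow> ('v \<Rightarrow>\<^sub>0 nat) \<Rightarrow> bool) \<Rightarrow> ('v, 'a::comm_ring_1) mpoly set \<Rightarrow> ('v, 'a) mpoly set \<Rightarrow> ('v, 'a) mpoly set" where
  "G_nice_closure le J E = \<Inter>{F. is_monomial_ideal F \<and> E \<subseteq> F \<and> G_nice le J F}"

end

theory Submission
  imports Defs
begin

lemma ideal_gen_ideal: "is_ideal (ideal_gen A)"
  unfolding is_ideal_def ideal_gen_def by auto

lemma ideal_gen_sub: "A \<subseteq> ideal_gen A"
  unfolding ideal_gen_def by auto

lemma ideal_gen_least: "is_ideal I \<Longrightarrow> A \<subseteq> I \<Longrightarrow> ideal_gen A \<subseteq> I"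
  unfolding ideal_gen_def by auto

lemma ideal_gen_mono: "A \<subseteq> B \<Longrightarrow> ideal_gen A \<subseteq> ideal_gen B"
  by (meson ideal_gen_ideal ideal_gen_least ideal_gen_sub order_trans)

lemma ideal_0: "is_ideal I \<Longrightarrow> 0 \<in> I"
  unfolding is_ideal_def by auto

lemma ideal_add: "is_ideal I \<Longrightarrow> a \<in> I \<Longrightarrow> b \<in> I \<Longrightarrow> a + b \<in> I"
  unfolding is_ideal_def by auto

lemma ideal_mult: "is_ideal I \<Longrightarrow> a \<in> I \<Longrightarrow> r * a \<in> I"
  unfolding is_ideal_def by auto

lemma ideal_diff: "is_ideal I \<Longrightarrow> a \<in> I \<Longrightarrow> b \<in> I \<Longrightarrow> a - b \<in> I"
proof -
  assume "is_ideal I" "a \<in> I" "b \<in> I"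
  then have "(-1) * b \<in> I" using ideal_mult[of I b "-1"] by blast
  then have "a + (-1) * b \<in> I" using \<open>is_ideal I\<close> \<open>a \<in> I\<close> ideal_add by blast
  then show ?thesis by simp
qed

lemma ideal_sum_ideal:
  assumes "is_ideal I" "is_ideal J" shows "is_ideal (ideal_sum I J)"
  unfolding is_ideal_def ideal_sum_def
proof (intro conjI ballI allI)
  show "0 \<in> {a + b |a b. a \<in> I \<and> b \<in> J}" using assms ideal_0 by force
next
  fix x y assume "x \<in> {a + b |a b. a \<in> I \<and> b \<in> J}" "y \<in> {a + b |a b. a \<in> I \<and> b \<in> J}"
  then obtain a b c d where "x = a + b" "y = c + d" "a \<in> I" "b \<in> J" "c \<in> I" "d \<in> J" by auto
  then have "x + y = (a + c) + (b + d)" "a + c \<in> I" "b + d \<in> J"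
    using assms ideal_add by (auto simp: algebra_simps)
  then show "x + y \<in> {a + b |a b. a \<in> I \<and> b \<in> J}" by blast
next
  fix r x assume "x \<in> {a + b |a b. a \<in> I \<and> b \<in> J}"
  then obtain a b where "x = a + b" "a \<in> I" "b \<in> J" by auto
  then have "r * x = r * a + r * b" "r * a \<in> I" "r * b \<in> J"
    using assms ideal_mult by (auto simp: algebra_simps)
  then show "r * x \<in> {a + b |a b. a \<in> I \<and> b \<in> J}" by blast
qed

lemma ideal_sum_left: "is_ideal J \<Longrightarrow> I \<subseteq> ideal_sum I J"
  unfolding ideal_sum_def using ideal_0 by force

lemma ideal_sum_right: "is_ideal I \<Longrightarrow> J \<subseteq> ideal_sum I J"
  unfolding ideal_sum_def using ideal_0 by force

lemma ideal_sum_mono: "J \<subseteq> J' \<Longrightarrow> ideal_sum I J \<subseteq> ideal_sum I J'"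
  unfolding ideal_sum_def by blast

lemma ideal_sum_least: "is_ideal K \<Longrightarrow> I \<subseteq> K \<Longrightarrow> J \<subseteq> K \<Longrightarrow> ideal_sum I J \<subseteq> K"
  unfolding ideal_sum_def using ideal_add by blast

lemma update_as_add: "a \<notin> Poly_Mapping.keys f \<Longrightarrow> Poly_Mapping.update a b f = Poly_Mapping.single a b + f"
  by (rule poly_mapping_eqI) (auto simp: lookup_update lookup_add lookup_single in_keys_iff when_def)

lemma span_in_ideal:
  fixes h :: "('v, 'a::field) mpoly"
  assumes I: "is_ideal I" and h: "\<forall>k\<in>Poly_Mapping.keys h. monom k \<in> I"
  shows "h \<in> I"
  using h
proof (induction h rule: update_induct)
  case const then show ?case using I ideal_0 by auto
next
  case (update f a b)
  have eq: "Poly_Mapping.update a b f = Poly_Mapping.single a b + f"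
    using update.hyps(1) by (rule update_as_add)
  have ka: "Poly_Mapping.keys (Poly_Mapping.update a b f) = insert a (Poly_Mapping.keys f)"
    using update.hyps by (simp add: keys_update)
  have "monom a \<in> I" using update.prems ka by auto
  then have "Poly_Mapping.single 0 b * monom a \<in> I" using I ideal_mult by blast
  then have s: "Poly_Mapping.single a b \<in> I" by (simp add: monom_def mult_single)
  have "f \<in> I" using update.IH update.prems ka by auto
  then show ?case using s eq I ideal_add by metis
qed

lift_definition proj :: "'k set \<Rightarrow> ('k \<Rightarrow>\<^sub>0 'b::zero) \<Rightarrow> 'k \<Rightarrow>\<^sub>0 'b"
  is "\<lambda>N f k. if k \<in> N then 0 else f k"
  by (erule finite_subset[rotated]) auto

lemma lookup_proj: "Poly_Mapping.lookup (proj N f) k = (if k \<in> N then 0 else Poly_Mapping.lookup f k)"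
  by transfer simp

lemma keys_proj: "Poly_Mapping.keys (proj N f) = Poly_Mapping.keys f - N"
  by (auto simp: in_keys_iff lookup_proj split: if_splits)

lemma proj_add: "proj N (f + g) = proj N f + (proj N g :: 'k \<Rightarrow>\<^sub>0 'b::comm_monoid_add)"
  by (rule poly_mapping_eqI) (simp add: lookup_proj lookup_add)

lemma proj_zero: "proj N 0 = 0"
  by (rule poly_mapping_eqI) (simp add: lookup_proj)

lemma keys_minus_proj: "Poly_Mapping.keys (f - proj N (f :: 'k \<Rightarrow>\<^sub>0 'b::ab_group_add)) \<subseteq> N"
  by (auto simp: in_keys_iff lookup_proj lookup_minus split: if_splits)

lemma lead_mon_eqI:
  assumes antisym: "\<forall>x y. le x y \<longrightarrow> le y x \<longrightarrow> x = y"
    and "u \<in> Poly_Mapping.keys g" "\<forall>m\<in>Poly_Mapping.keys g. le m u"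
  shows "lead_mon le g = u"
  unfolding lead_mon_def
proof (rule the_equality)
  show "u \<in> Poly_Mapping.keys g \<and> (\<forall>m'\<in>Poly_Mapping.keys g. le m' u)" using assms(2,3) by blast
next
  fix m assume "m \<in> Poly_Mapping.keys g \<and> (\<forall>m'\<in>Poly_Mapping.keys g. le m' m)"
  then have "le u m" "le m u" using assms(2,3) by blast+
  then show "m = u" using antisym by blast
qed

lemma max_exists:
  assumes tot: "\<forall>x y. le x y \<or> le y x" and tr: "\<forall>x y z. le x y \<longrightarrow> le y z \<longrightarrow> le x z"
    and "finite A" "A \<noteq> {}"
  shows "\<exists>u\<in>A. \<forall>m\<in>A. le m u"
  using assms(3,4)
proof (induction A rule: finite_ne_induct)
  case (singleton x)
  have "le x x" using tot by blast
  then show ?case by simp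
next
  case (insert x F)
  then obtain u where u: "u \<in> F" "\<forall>m\<in>F. le m u" by blast
  show ?case
  proof (cases "le x u")
    case True
    have "\<forall>m\<in>insert x F. le m u" using True u by simp
    then show ?thesis using u(1) by blast
  next
    case False then have "le u x" using tot by blast
    have "\<forall>m\<in>F. le m x"
    proof
      fix m assume "m \<in> F"
      then have "le m u" using u by blast
      then show "le m x" using tr \<open>le u x\<close> by blast
    qed
    moreover have "le x x" using tot by blast
    ultimately show ?thesis by simp
  qed
qed

lemma lead_mon_props:
  assumes "monomial_order le" "(f :: ('v, 'a::zero) mpoly) \<noteq> 0"
  shows "lead_mon le f \<in> Poly_Mapping.keys f \<and> (\<forall>m\<in>Poly_Mapping.keys f. le m (lead_mon le f))"
proof -
  have mo1: "\<forall>x y. le x y \<or> le y x"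
    using assms(1) unfolding monomial_order_def by (elim conjE) assumption
  have mo2: "\<forall>x y z. le x y \<longrightarrow> le y z \<longrightarrow> le x z"
    using assms(1) unfolding monomial_order_def by (elim conjE) assumption
  have mo3: "\<forall>x y. le x y \<longrightarrow> le y x \<longrightarrow> x = y"
    using assms(1) unfolding monomial_order_def by (elim conjE) assumption
  have "Poly_Mapping.keys f \<noteq> {}" using assms(2) keys_eq_empty by blast
  then obtain u where u: "u \<in> Poly_Mapping.keys f" "\<forall>m\<in>Poly_Mapping.keys f. le m u"
    using max_exists[OF mo1 mo2 finite_keys \<open>Poly_Mapping.keys f \<noteq> {}\<close>] by blast
  have "lead_mon le f = u" by (rule lead_mon_eqI[OF mo3 u(1) u(2)])
  then show ?thesis using u by simp
qed


theorem mainTheorem12: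
  fixes le :: "('v::finite \<Rightarrow>\<^sub>0 nat) \<Rightarrow> ('v \<Rightarrow>\<^sub>0 nat) \<Rightarrow> bool"
    and J E :: "('v, 'a::field) mpoly set"
  assumes "monomial_order le"
    and "is_binomial_ideal J"
    and "is_monomial_ideal E"
  shows "ideal_sum J E = ideal_sum J (G_nice_closure le J E)"
proof -
  have mo3: "\<forall>x y. le x y \<longrightarrow> le y x \<longrightarrow> x = y"
    using assms(1) unfolding monomial_order_def by (elim conjE) assumption
  have mo0: "\<forall>x. le x x"
    using assms(1) unfolding monomial_order_def by (elim conjE) assumption
  obtain B where B: "\<forall>f\<in>B. is_binomial f" "J = ideal_gen B"
    using assms(2) unfolding is_binomial_ideal_def by blast
  obtain M where M: "E = ideal_gen (monom ` M)"
    using assms(3) unfolding is_monomial_ideal_def by blast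
  have idJ: "is_ideal J" using B(2) ideal_gen_ideal by simp
  have idE: "is_ideal E" using M ideal_gen_ideal by simp
  define I where "I = ideal_sum J E"
  have idI: "is_ideal I" unfolding I_def using idJ idE by (rule ideal_sum_ideal)
  have JI: "J \<subseteq> I" unfolding I_def using idE by (rule ideal_sum_left)
  have EI: "E \<subseteq> I" unfolding I_def using idJ by (rule ideal_sum_right)
  define N where "N = {m. monom m \<in> I}"
  have spanN: "h \<in> I" if "Poly_Mapping.keys h \<subseteq> N" for h :: "('v,'a) mpoly"
    by (rule span_in_ideal[OF idI]) (use that in \<open>auto simp: N_def\<close>)
  have projI: "proj N g \<in> I" if "g \<in> I" for g
  proof -
    have "g - proj N g \<in> I" by (rule spanN[OF keys_minus_proj])
    then have "g - (g - proj N g) \<in> I" by (rule ideal_diff[OF idI that])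
    then show ?thesis by simp
  qed
  have bin: "proj N g \<in> J" if g: "g \<in> J" "card (Poly_Mapping.keys g) \<le> 2" for g
  proof (cases "Poly_Mapping.keys g \<inter> N = {}")
    case True
    then have "proj N g = g"
      by (intro poly_mapping_eqI) (auto simp: lookup_proj in_keys_iff)
    then show ?thesis using g by simp
  next
    case False
    show ?thesis
    proof (cases "Poly_Mapping.keys g \<subseteq> N")
      case True
      then have "Poly_Mapping.keys (proj N g) = {}" by (simp add: keys_proj)
      then have "proj N g = 0" by simp
      then show ?thesis using ideal_0[OF idJ] by simp
    next
      case False2: False
      obtain v where v: "v \<in> Poly_Mapping.keys g" "v \<in> N" using False by blast
      obtain u where u: "u \<in> Poly_Mapping.keys g" "u \<notin> N" using False2 by blast
      have uv: "u \<noteq> v" using u v by blast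
      have sub: "{u,v} \<subseteq> Poly_Mapping.keys g" using u v by blast
      have "card {u,v} = 2" using uv by simp
      then have kg: "{u,v} = Poly_Mapping.keys g"
        using card_seteq[OF finite_keys sub] g(2) by simp
      have pg: "proj N g = Poly_Mapping.single u (Poly_Mapping.lookup g u)"
      proof (rule poly_mapping_eqI)
        fix k
        show "Poly_Mapping.lookup (proj N g) k = Poly_Mapping.lookup (Poly_Mapping.single u (Poly_Mapping.lookup g u)) k"
        proof (cases "k = u")
          case True then show ?thesis using u by (simp add: lookup_proj)
        next
          case False
          have "k \<in> N \<or> k \<notin> Poly_Mapping.keys g"
            using kg v(2) False by blast
          then have "k \<in> N \<or> Poly_Mapping.lookup g k = 0"
            by (simp add: in_keys_iff)
          then show ?thesis using False by (auto simp: lookup_proj lookup_single when_def)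
        qed
      qed
      have c: "Poly_Mapping.lookup g u \<noteq> 0" using u(1) by (simp add: in_keys_iff)
      have "proj N g \<in> I" using projI g(1) JI by blast
      then have "Poly_Mapping.single 0 (inverse (Poly_Mapping.lookup g u)) * proj N g \<in> I"
        using ideal_mult[OF idI] by blast
      then have "monom u \<in> I" using c by (simp add: pg mult_single monom_def)
      then have False using u(2) unfolding N_def by blast
      then show ?thesis by blast
    qed
  qed
  define P where "P = {f. \<forall>r. proj N (r * f) \<in> J}"
  have idP: "is_ideal P"
    unfolding is_ideal_def
  proof (intro conjI ballI allI)
    show "0 \<in> P" unfolding P_def using ideal_0[OF idJ] by (simp add: proj_zero)
  next
    fix a b assume "a \<in> P" "b \<in> P"
    then show "a + b \<in> P" unfolding P_def
      using ideal_add[OF idJ] by (simp add: distrib_left proj_add)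
  next
    fix s a assume "a \<in> P"
    then show "s * a \<in> P" unfolding P_def
      by (simp add: mult.assoc[symmetric])
  qed
  have BP: "B \<subseteq> P"
  proof
    fix b assume bB: "b \<in> B"
    have bJ: "b \<in> J" using bB B(2) ideal_gen_sub by blast
    have cb: "card (Poly_Mapping.keys b) \<le> 2" using bB B(1) unfolding is_binomial_def by blast
    have "proj N (r * b) \<in> J" for r
    proof (induction r rule: update_induct)
      case const then show ?case using ideal_0[OF idJ] by (simp add: proj_zero)
    next
      case (update f a c)
      have eq: "Poly_Mapping.update a c f * b = Poly_Mapping.single a c * b + f * b"
        using update.hyps(1) by (simp add: update_as_add distrib_right)
      have "Poly_Mapping.keys (Poly_Mapping.single a c * b) \<subseteq> (\<lambda>k. a + k) ` Poly_Mapping.keys b"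
        using keys_mult[of "Poly_Mapping.single a c" b] by (auto split: if_splits)
      then have "card (Poly_Mapping.keys (Poly_Mapping.single a c * b)) \<le> card ((\<lambda>k. a + k) ` Poly_Mapping.keys b)"
        by (intro card_mono) auto
      also have "\<dots> \<le> card (Poly_Mapping.keys b)" by (rule card_image_le) simp
      finally have "card (Poly_Mapping.keys (Poly_Mapping.single a c * b)) \<le> 2" using cb by simp
      moreover have "Poly_Mapping.single a c * b \<in> J" using ideal_mult[OF idJ bJ] by blast
      ultimately have "proj N (Poly_Mapping.single a c * b) \<in> J" using bin by blast
      then show ?case using update.IH ideal_add[OF idJ] by (simp add: eq proj_add)
    qed
    then show "b \<in> P" unfolding P_def by blast
  qed
  have projJ: "proj N j \<in> J" if "j \<in> J" for j
  proof -
    have "J \<subseteq> P" using B(2) ideal_gen_least[OF idP BP] by simp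
    then have "proj N (1 * j) \<in> J" using that unfolding P_def by blast
    then show ?thesis by simp
  qed
  define Q where "Q = {f :: ('v,'a) mpoly. \<forall>k\<in>Poly_Mapping.keys f. monom k \<in> E}"
  have idQ: "is_ideal Q"
    unfolding is_ideal_def
  proof (intro conjI ballI allI)
    show "0 \<in> Q" unfolding Q_def by simp
  next
    fix a b assume "a \<in> Q" "b \<in> Q"
    then show "a + b \<in> Q" unfolding Q_def using keys_add[of a b] by blast
  next
    fix r a assume a: "a \<in> Q"
    show "r * a \<in> Q" unfolding Q_def
    proof (intro CollectI ballI)
      fix k assume "k \<in> Poly_Mapping.keys (r * a)"
      then obtain x y where xy: "k = x + y" "x \<in> Poly_Mapping.keys r" "y \<in> Poly_Mapping.keys a"
        using keys_mult[of r a] by blast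
      have "monom y \<in> E" using a xy(3) unfolding Q_def by blast
      then have "monom x * monom y \<in> E" using ideal_mult[OF idE] by blast
      then show "monom k \<in> E" using xy(1) by (simp add: monom_def mult_single)
    qed
  qed
  have MQ: "monom ` M \<subseteq> Q"
  proof
    fix x :: "('v,'a) mpoly" assume "x \<in> monom ` M"
    then obtain m where m: "x = monom m" "m \<in> M" by blast
    have "monom m \<in> E" using M m(2) ideal_gen_sub by blast
    then show "x \<in> Q" unfolding Q_def m(1) by (simp add: monom_def)
  qed
  have projE: "proj N e = 0" if "e \<in> E" for e
  proof -
    have "e \<in> Q" using ideal_gen_least[OF idQ MQ] M that by blast
    then have "Poly_Mapping.keys e \<subseteq> N" unfolding Q_def N_def using EI by blast
    then have "Poly_Mapping.keys (proj N e) = {}" by (simp add: keys_proj)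
    then show ?thesis by simp
  qed
  have projIJ: "proj N f \<in> J" if fI: "f \<in> I" for f
  proof -
    obtain j e where "f = j + e" "j \<in> J" "e \<in> E" using fI unfolding I_def ideal_sum_def by blast
    then show ?thesis using projJ projE by (simp add: proj_add)
  qed
  define F where "F = ideal_gen (monom ` N :: ('v,'a) mpoly set)"
  have idF: "is_ideal F" unfolding F_def by (rule ideal_gen_ideal)
  have monF: "is_monomial_ideal F" unfolding F_def is_monomial_ideal_def by blast
  have EF: "E \<subseteq> F"
  proof -
    have "monom ` M \<subseteq> F"
    proof
      fix x :: "('v,'a) mpoly" assume "x \<in> monom ` M"
      then obtain m where m: "x = monom m" "m \<in> M" by blast
      have "monom m \<in> E" using M m(2) ideal_gen_sub by blast
      then have "m \<in> N" using EI unfolding N_def by blast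
      then show "x \<in> F" unfolding F_def m(1) using ideal_gen_sub by blast
    qed
    then show ?thesis using M ideal_gen_least[OF idF] by simp
  qed
  have FI: "F \<subseteq> I" unfolding F_def
    by (rule ideal_gen_least[OF idI]) (auto simp: N_def)
  have JF: "ideal_sum J F = I"
  proof
    show "ideal_sum J F \<subseteq> I" by (rule ideal_sum_least[OF idI JI FI])
    show "I \<subseteq> ideal_sum J F" unfolding I_def by (rule ideal_sum_mono[OF EF])
  qed
  have lm_monom: "lead_mon le (monom u :: ('v,'a) mpoly) = u" for u
    by (rule lead_mon_eqI[OF mo3]) (use mo0 in \<open>auto simp: monom_def\<close>)
  have monom_nz: "(monom u :: ('v,'a) mpoly) \<noteq> 0" for u
  proof
    assume "(monom u :: ('v,'a) mpoly) = 0"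
    then have "Poly_Mapping.keys (monom u :: ('v,'a) mpoly) = {}" by simp
    then show False by (simp add: monom_def)
  qed
  have init_id: "is_ideal (init_ideal le X)" for X :: "('v,'a) mpoly set"
    unfolding init_ideal_def by (rule ideal_gen_ideal)
  have init_mono: "init_ideal le X \<subseteq> init_ideal le Y" if "X \<subseteq> Y" for X Y :: "('v,'a) mpoly set"
    unfolding init_ideal_def by (rule ideal_gen_mono) (use that in blast)
  have Gn: "G_nice le J F"
    unfolding G_nice_def JF
  proof
    show "ideal_sum (init_ideal le J) (init_ideal le F) \<subseteq> init_ideal le I"
      by (rule ideal_sum_least[OF init_id init_mono[OF JI] init_mono[OF FI]])
    show "init_ideal le I \<subseteq> ideal_sum (init_ideal le J) (init_ideal le F)"
      unfolding init_ideal_def[of le I]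
    proof (rule ideal_gen_least[OF ideal_sum_ideal[OF init_id init_id]], rule subsetI)
      fix x :: "('v,'a) mpoly" assume "x \<in> {monom (lead_mon le f) |f. f \<in> I \<and> f \<noteq> 0}"
      then obtain f where f: "x = monom (lead_mon le f)" "f \<in> I" "f \<noteq> 0" by blast
      define u where "u = lead_mon le f"
      have u: "u \<in> Poly_Mapping.keys f" "\<forall>m\<in>Poly_Mapping.keys f. le m u"
        using lead_mon_props[OF assms(1) f(3)] unfolding u_def by blast+
      show "x \<in> ideal_sum (init_ideal le J) (init_ideal le F)"
      proof (cases "u \<in> N")
        case True
        then have "monom u \<in> F" unfolding F_def using ideal_gen_sub by blast
        then have "monom u \<in> {monom (lead_mon le f) |f. f \<in> F \<and> f \<noteq> 0}"
          using monom_nz[of u] lm_monom[of u] by (metis (mono_tags, lifting) mem_Collect_eq)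
        then have "monom u \<in> init_ideal le F"
          unfolding init_ideal_def by (rule subsetD[OF ideal_gen_sub])
        then have "0 + monom u \<in> ideal_sum (init_ideal le J) (init_ideal le F)"
          unfolding ideal_sum_def using ideal_0[OF init_id] by blast
        then show ?thesis unfolding f(1) u_def by simp
      next
        case False
        define g where "g = proj N f"
        have gJ: "g \<in> J" unfolding g_def using projIJ f(2) by blast
        have ug: "u \<in> Poly_Mapping.keys g" unfolding g_def keys_proj using u(1) False by blast
        have "lead_mon le g = u"
          by (rule lead_mon_eqI[OF mo3 ug]) (use u(2) in \<open>auto simp: g_def keys_proj\<close>)
        moreover have "g \<noteq> 0" using ug by auto
        ultimately have "monom u \<in> {monom (lead_mon le f) |f. f \<in> J \<and> f \<noteq> 0}"
          using gJ by (metis (mono_tags, lifting) mem_Collect_eq)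
        then have "monom u \<in> init_ideal le J"
          unfolding init_ideal_def by (rule subsetD[OF ideal_gen_sub])
        then have "monom u + 0 \<in> ideal_sum (init_ideal le J) (init_ideal le F)"
          unfolding ideal_sum_def using ideal_0[OF init_id] by blast
        then show ?thesis unfolding f(1) u_def by simp
      qed
    qed
  qed
  define C where "C = G_nice_closure le J E"
  have EC: "E \<subseteq> C" unfolding C_def G_nice_closure_def by (rule Inter_greatest) simp
  have CF: "C \<subseteq> F" unfolding C_def G_nice_closure_def by (rule Inter_lower) (simp add: monF EF Gn)
  have "ideal_sum J E \<subseteq> ideal_sum J C" by (rule ideal_sum_mono[OF EC])
  moreover have "ideal_sum J C \<subseteq> ideal_sum J E"
  proof -
    have "ideal_sum J C \<subseteq> ideal_sum J F" by (rule ideal_sum_mono[OF CF])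
    then show ?thesis using JF unfolding I_def by (simp only:)
  qed
  ultimately show ?thesis unfolding C_def by (rule subset_antisym)
qed

end
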